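(* Consider the generalized mass-action system $$\dot s=f(u,s)=\sum_{j=1}^{r}u_j(t)\,s^{v_{\cdot j}}\big(v'_{\cdot j}-v_{\cdot j}\big),\qquad s(0)=s_0\in\mathbb{R}^n_{\ge 0},$$ where $u:[0,\infty)\to\mathbb{U}$ with $\mathbb{U}\subset\mathbb{R}^r_{>0}$. Suppose that $\lim_{t\to\infty}u(t)=\bar u\in\mathbb{R}^r_{>0}$, that $s(t)$ is a bounded solution defined for all $t\ge 0$, and that $\bar s\in\mathbb{R}^n_{>0}$ is the unique equilibrium of the (constant-rate) mass-action system $\dot s=f(\bar u,s)$ in $(s_0+\mathscr{S})\cap\mathbb{R}^n_{>0}$. If $V$ is an ISS-Lyapunov function with respect to $(\bar u,\bar s)$ for this system, then either $s(t)\to\bar s$ as $t\to\infty$, or $s(t)\to\partial\mathbb{R}^n_{\ge 0}$ as $t\to\infty$ (i.e. $\operatorname{dist}(s(t),\partial\mathbb{R}^n_{\ge0})\to 0$).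
   Context: A chemical reaction network (CRN) has species $S_1,\dots,S_n$ and reactions $v_{\cdot j}\to v'_{\cdot j}$, $j=1,\dots,r$, with $v_{\cdot j},v'_{\cdot j}\in\mathbb{Z}^n_{\ge0}$, $v_{\cdot j}\neq v'_{\cdot j}$. Notation: $s^{v}=\prod_{i=1}^n s_i^{v_i}$ with $0^0=1$. The stoichiometric subspace is $\mathscr{S}=\mathrm{span}\{v'_{\cdot j}-v_{\cdot j}: j=1,\dots,r\}$. A class $\mathcal{K}_\infty$ function is a continuous strictly increasing $\gamma:\mathbb{R}_{\ge0}\to\mathbb{R}_{\ge0}$ with $\gamma(0)=0$ and $\gamma(s)\to\infty$ as $s\to\infty$. ISS-Lyapunov function: for the system above, an ISS-Lyapunov function with respect to $(\bar u,\bar s)\in\mathbb{R}^r_{>0}\times\mathbb{R}^n_{>0}$ is a continuous $V:\mathbb{R}^n_{\ge0}\to\mathbb{R}_{\ge0}$ such that (i) the restriction of $V$ to $\mathbb{R}^n_{>0}$ is continuously differentiable; (ii) $V(s)\to+\infty$ as $|s|\to+\infty$; (iii) $V(\bar s)=0$ and $V(s)>0$ for $s\in\mathbb{R}^n_{\ge0}\setminus\{\bar s\}$; (iv) for each compact $F\subset\mathbb{R}^n_{\ge0}$ there exist class $\mathcal{K}_\infty$ functions $\alpha,\rho$ such that $\nabla V(s)^\top f(u,s)\le-\alpha(|s-\bar s|)+\rho(|u-\bar u|)$ for all $u\in\mathbb{U}$ and all $s\in F\cap(s_0+\mathscr{S})\cap\mathbb{R}^n_{>0}$. *)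

theory Defs
  imports "HOL-Analysis.Analysis"
begin

text \<open>Species are indexed by a finite type 'n, reactions by a finite type 'r.
  Reactant / product complexes: vectors of natural numbers.\<close>

definition nonneg_orthant :: "(real ^ 'n) set" where
  "nonneg_orthant = {x. \<forall>i. 0 \<le> x $ i}"

definition pos_orthant :: "(real ^ 'n) set" where
  "pos_orthant = {x. \<forall>i. 0 < x $ i}"

text \<open>Monomial s^v (with 0^0 = 1, as for Isabelle's power).\<close>
definition monom :: "real ^ 'n \<Rightarrow> nat ^ 'n \<Rightarrow> real" where
  "monom s v = (\<Prod>i\<in>UNIV. (s $ i) ^ (v $ i))"

definition reaction_vec :: "nat ^ 'n \<Rightarrow> nat ^ 'n \<Rightarrow> real ^ 'n" where
  "reaction_vec a b = (\<chi> i. real (b $ i) - real (a $ i))"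

definition gma_field ::
  "('r::finite \<Rightarrow> nat ^ 'n) \<Rightarrow> ('r \<Rightarrow> nat ^ 'n) \<Rightarrow> real ^ 'r \<Rightarrow> real ^ 'n \<Rightarrow> real ^ 'n" where
  "gma_field v v' u s = (\<Sum>j\<in>UNIV. (u $ j * monom s (v j)) *\<^sub>R reaction_vec (v j) (v' j))"

definition stoich_subspace :: "('r::finite \<Rightarrow> nat ^ 'n) \<Rightarrow> ('r \<Rightarrow> nat ^ 'n) \<Rightarrow> (real ^ 'n) set" where
  "stoich_subspace v v' = span {reaction_vec (v j) (v' j) | j. True}"

definition class_K_inf :: "(real \<Rightarrow> real) \<Rightarrow> bool" where
  "class_K_inf g \<longleftrightarrow> continuous_on {0..} g \<and> strict_mono_on {0..} g \<and> g 0 = 0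
     \<and> filterlim g at_top at_top"

definition ISS_Lyapunov ::
  "('r::finite \<Rightarrow> nat ^ 'n) \<Rightarrow> ('r \<Rightarrow> nat ^ 'n) \<Rightarrow> (real ^ 'r) set \<Rightarrow> real ^ 'n
   \<Rightarrow> (real ^ 'n \<Rightarrow> real) \<Rightarrow> real ^ 'r \<Rightarrow> real ^ 'n \<Rightarrow> bool" where
  "ISS_Lyapunov v v' U s0 V ubar sbar \<longleftrightarrow>
     continuous_on nonneg_orthant V \<and> (\<forall>s\<in>nonneg_orthant. 0 \<le> V s) \<and>
     (\<exists>DV. (\<forall>s\<in>pos_orthant. (V has_derivative (\<lambda>h. DV s \<bullet> h)) (at s))
        \<and> continuous_on pos_orthant DV
        \<and> (\<forall>F. compact F \<and> F \<subseteq> nonneg_orthant \<longrightarrow>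
              (\<exists>\<alpha> \<rho>. class_K_inf \<alpha> \<and> class_K_inf \<rho> \<and>
                 (\<forall>u\<in>U. \<forall>s\<in>F \<inter> {s0 + x | x. x \<in> stoich_subspace v v'} \<inter> pos_orthant.
                    DV s \<bullet> gma_field v v' u s \<le> - \<alpha> (norm (s - sbar)) + \<rho> (norm (u - ubar)))))) \<and>
     (\<forall>M. \<exists>R. \<forall>s\<in>nonneg_orthant. norm s \<ge> R \<longrightarrow> V s \<ge> M) \<and>
     V sbar = 0 \<and> (\<forall>s\<in>nonneg_orthant - {sbar}. V s > 0)"

end

theory Submission
  imports Defs
begin

lemma deriv_at:
  fixes s :: "real \<Rightarrow> 'a::real_normed_vector"
  assumes "(s has_vector_derivative g) (at t within {0..})" "t > 0"
  shows "(s has_vector_derivative g) (at t)"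
proof -
  have "(s has_vector_derivative g) (at t within {0<..})"
    using assms(1) by (rule has_vector_derivative_within_subset) auto
  moreover have e: "at t within {0<..} = at t" by (rule at_within_open) (use assms(2) in auto)
  ultimately show ?thesis by simp
qed

lemma field_in_span: "gma_field v v' u x \<in> stoich_subspace v v'"
  unfolding gma_field_def stoich_subspace_def
  by (intro span_sum span_mul span_base) auto

lemma comp_deriv:
  fixes s :: "real \<Rightarrow> real ^ 'n"
  assumes "(s has_vector_derivative g) (at t)"
  shows "((\<lambda>t. s t $ i) has_real_derivative (g $ i)) (at t)"
  using bounded_linear.has_vector_derivative[OF bounded_linear_vec_nth assms, of i]
  by (simp add: has_real_derivative_iff_has_vector_derivative)

lemma frontier_mem:
  fixes x :: "real ^ 'n"
  assumes "x \<in> nonneg_orthant" "x $ i = 0"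
  shows "x \<in> frontier nonneg_orthant"
proof -
  have "x \<notin> interior nonneg_orthant"
  proof
    assume "x \<in> interior nonneg_orthant"
    then obtain e where e: "e > 0" "ball x e \<subseteq> nonneg_orthant" by (auto simp: mem_interior)
    define y where "y = x - (e/2) *\<^sub>R axis i 1"
    have "dist x y = e/2" using e by (simp add: y_def dist_norm)
    then have "y \<in> nonneg_orthant" using e by auto
    moreover have "y $ i = - e/2" using assms by (simp add: y_def axis_def)
    ultimately have "0 \<le> - e/2" unfolding nonneg_orthant_def by (metis mem_Collect_eq)
    then show False using e by simp
  qed
  then show ?thesis using assms(1) closure_subset by (auto simp: frontier_def)
qed

lemma closed_nonneg: "closed (nonneg_orthant :: (real^'n) set)"
  unfolding nonneg_orthant_def
  by (intro closed_Collect_all closed_Collect_le continuous_intros)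

lemma monom_le:
  fixes x :: "real ^ 'n"
  assumes "x \<in> nonneg_orthant" "\<forall>k. x $ k \<le> M" "1 \<le> M" "1 \<le> w $ i"
  shows "monom x w \<le> x $ i * (\<Prod>k\<in>UNIV. M ^ (w $ k))"
proof -
  have "monom x w \<le> (\<Prod>k\<in>UNIV. (if k = i then x $ i else 1) * M ^ (w $ k))"
    unfolding monom_def
  proof (rule prod_mono, safe)
    fix k
    have xk: "0 \<le> x $ k" "x $ k \<le> M" using assms by (auto simp: nonneg_orthant_def)
    show "0 \<le> x $ k ^ w $ k" using xk by simp
    show "x $ k ^ w $ k \<le> (if k = i then x $ i else 1) * M ^ w $ k"
    proof (cases "k = i")
      case True
      obtain m where m: "w $ i = Suc m" using assms(4) by (cases "w $ i") auto
      have "x $ i ^ m \<le> M ^ m" using xk True by (intro power_mono) auto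
      also have "\<dots> \<le> M ^ Suc m" using assms(3) by (simp add: power_increasing)
      finally have "x $ i * x $ i ^ m \<le> x $ i * M ^ Suc m"
        using xk True by (intro mult_left_mono) auto
      then show ?thesis using True m by simp
    next
      case False
      then show ?thesis using xk by (simp add: power_mono)
    qed
  qed
  also have "\<dots> = x $ i * (\<Prod>k\<in>UNIV. M ^ (w $ k))"
    by (simp add: prod.distrib prod.delta)
  finally show ?thesis .
qed


lemma in_class:
  fixes s :: "real \<Rightarrow> real ^ 'n"
  assumes sol: "\<forall>t\<ge>0. (s has_vector_derivative gma_field v v' (u t) (s t)) (at t within {0..})"
    and "t \<ge> 0"
  shows "s t - s 0 \<in> stoich_subspace v v'"
proof -
  let ?S = "{reaction_vec (v j) (v' j) | j. True}"
  have sp: "span ?S = stoich_subspace v v'" by (simp add: stoich_subspace_def)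
  obtain y z where y: "y \<in> span ?S" and z: "\<And>w. w \<in> span ?S \<Longrightarrow> orthogonal z w"
    and xyz: "s t - s 0 = y + z"
    using orthogonal_subspace_decomp_exists[of ?S "s t - s 0"] by blast
  have "\<exists>c. \<forall>x\<in>{0..}. z \<bullet> (s x - s 0) = c"
  proof (rule has_derivative_zero_constant)
    fix x :: real assume x: "x \<in> {0..}"
    have d: "(s has_derivative (\<lambda>h. h *\<^sub>R gma_field v v' (u x) (s x))) (at x within {0..})"
      using sol x by (simp add: has_vector_derivative_def)
    have "((\<lambda>x. z \<bullet> (s x - s 0)) has_derivative (\<lambda>h. z \<bullet> (h *\<^sub>R gma_field v v' (u x) (s x)))) (at x within {0..})"
      using has_derivative_inner_right[OF has_derivative_diff[OF d has_derivative_const[of "s 0"]], of z] by simp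
    moreover have "z \<bullet> gma_field v v' (u x) (s x) = 0"
      using z[of "gma_field v v' (u x) (s x)"] field_in_span sp by (auto simp: orthogonal_def)
    ultimately show "((\<lambda>x. z \<bullet> (s x - s 0)) has_derivative (\<lambda>h. 0)) (at x within {0..})"
      by simp
  qed (simp add: convex_real_interval)
  then obtain c where c: "\<forall>x\<in>{0..}. z \<bullet> (s x - s 0) = c" by blast
  have "z \<bullet> (s t - s 0) = z \<bullet> (s 0 - s 0)" using c assms(2) by (metis atLeast_iff order_refl)
  then have "z \<bullet> (y + z) = 0" using xyz by simp
  moreover have "z \<bullet> y = 0" using z[OF y] by (simp add: orthogonal_def)
  ultimately have "z = 0" by (simp add: inner_add_right)
  then show ?thesis using xyz y sp by simp
qed

lemma field_lower:
  fixes x :: "real ^ 'n" and u :: "real ^ 'r::finite"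
  assumes x: "x \<in> nonneg_orthant" "\<forall>k. x $ k \<le> M" "1 \<le> M"
    and u: "\<forall>j. 0 < u $ j \<and> u $ j \<le> Ub"
  shows "gma_field v v' u x $ i \<ge>
     - (\<Sum>j\<in>UNIV. Ub * (\<Prod>k\<in>UNIV. M ^ (v j $ k)) * real (v j $ i)) * x $ i"
proof -
  have "gma_field v v' u x $ i = (\<Sum>j\<in>UNIV. u $ j * monom x (v j) * (real (v' j $ i) - real (v j $ i)))"
    by (simp add: gma_field_def reaction_vec_def sum_component)
  moreover have "- (\<Sum>j\<in>UNIV. Ub * (\<Prod>k\<in>UNIV. M ^ (v j $ k)) * real (v j $ i)) * x $ i
      = (\<Sum>j\<in>UNIV. - (Ub * (\<Prod>k\<in>UNIV. M ^ (v j $ k)) * real (v j $ i) * x $ i))"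
    by (simp add: sum_distrib_right sum_negf)
  moreover have "(\<Sum>j\<in>UNIV. - (Ub * (\<Prod>k\<in>UNIV. M ^ (v j $ k)) * real (v j $ i) * x $ i))
      \<le> (\<Sum>j\<in>UNIV. u $ j * monom x (v j) * (real (v' j $ i) - real (v j $ i)))"
  proof (rule sum_mono)
    fix j
    have m0: "0 \<le> monom x (v j)" using x(1) unfolding monom_def nonneg_orthant_def
      by (intro prod_nonneg) auto
    have uj: "0 < u $ j" "u $ j \<le> Ub" using u by auto
    have xi: "0 \<le> x $ i" using x(1) by (auto simp: nonneg_orthant_def)
    have A: "- (u $ j * monom x (v j) * real (v j $ i)) \<le> u $ j * monom x (v j) * (real (v' j $ i) - real (v j $ i))"
      using uj m0 by (simp add: algebra_simps)
    have B: "u $ j * monom x (v j) * real (v j $ i) \<le> Ub * (\<Prod>k\<in>UNIV. M ^ (v j $ k)) * real (v j $ i) * x $ i"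
    proof (cases "v j $ i = 0")
      case True then show ?thesis by simp
    next
      case False
      then have "monom x (v j) \<le> x $ i * (\<Prod>k\<in>UNIV. M ^ (v j $ k))"
        using monom_le[OF x(1) x(2) x(3), of "v j" i] by simp
      then have "u $ j * monom x (v j) \<le> Ub * (x $ i * (\<Prod>k\<in>UNIV. M ^ (v j $ k)))"
        using uj m0 xi by (intro mult_mono) auto
      then have "u $ j * monom x (v j) * real (v j $ i) \<le> Ub * (x $ i * (\<Prod>k\<in>UNIV. M ^ (v j $ k))) * real (v j $ i)"
        by (rule mult_right_mono) simp
      then show ?thesis by (simp add: mult_ac)
    qed
    show "- (Ub * (\<Prod>k\<in>UNIV. M ^ (v j $ k)) * real (v j $ i) * x $ i) \<le> u $ j * monom x (v j) * (real (v' j $ i) - real (v j $ i))"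
      using A B by linarith
  qed
  ultimately show ?thesis by simp
qed


lemma persist:
  fixes xi d :: "real \<Rightarrow> real"
  assumes der: "\<forall>t\<ge>a. (xi has_real_derivative d t) (at t)"
    and lo: "\<forall>t\<ge>a. d t \<ge> - c * xi t" and pos: "xi a > 0" and at: "a \<le> t"
  shows "xi t > 0"
proof (cases "a = t")
  case True then show ?thesis using pos by simp
next
  case False
  then have lt: "a < t" using at by simp
  let ?g = "\<lambda>\<tau>. exp (c * \<tau>) * xi \<tau>"
  let ?g' = "\<lambda>\<tau>. exp (c * \<tau>) * (c * xi \<tau> + d \<tau>)"
  have "\<exists>z. a < z \<and> z < t \<and> ?g t - ?g a = (t - a) * ?g' z"
  proof (rule MVT2[OF lt])
    fix x assume x: "a \<le> x" "x \<le> t"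
    have "((\<lambda>\<tau>. exp (c * \<tau>) * xi \<tau>) has_real_derivative
        (exp (c * x) * (c * 1)) * xi x + exp (c * x) * d x) (at x)"
      by (intro derivative_eq_intros) (use der x in auto)
    then show "(?g has_real_derivative ?g' x) (at x)"
      by (simp add: algebra_simps)
  qed
  then obtain z where z: "a < z" "z < t" "?g t - ?g a = (t - a) * ?g' z" by blast
  have "- c * xi z \<le> d z" using lo z(1) by simp
  then have "0 \<le> c * xi z + d z" by linarith
  then have "0 \<le> ?g' z" by simp
  moreover have "0 \<le> t - a" using lt by simp
  ultimately have "0 \<le> (t - a) * ?g' z" by (simp only: mult_nonneg_nonneg)
  then have "?g a \<le> ?g t" using z(3) by linarith
  moreover have "0 < ?g a" using pos by simp
  ultimately have "0 < exp (c * t) * xi t" by linarith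
  then show ?thesis by (simp add: zero_less_mult_iff)
qed


lemma conv:
  fixes x :: "real \<Rightarrow> 'a::metric_space" and V :: "'a \<Rightarrow> real"
  assumes K: "compact K" "K \<subseteq> N" "sbar \<in> N"
    and xK: "\<forall>t\<ge>T. x t \<in> K"
    and xc: "continuous_on {T..} x"
    and Vc: "continuous_on N V" and V0: "V sbar = 0" and Vpos: "\<forall>y\<in>K. y \<noteq> sbar \<longrightarrow> V y > 0"
    and der: "\<forall>t\<ge>T. ((\<lambda>t. V (x t)) has_real_derivative D t) (at t)"
    and Dle: "\<forall>t\<ge>T. D t \<le> - \<alpha> (dist (x t) sbar) + r t"
    and r: "(r \<longlongrightarrow> 0) at_top"
    and al: "strict_mono_on {0..} \<alpha>" "\<alpha> 0 = 0"
  shows "(x \<longlongrightarrow> sbar) at_top"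
proof (rule tendstoI)
  fix \<epsilon> :: real assume \<epsilon>: "\<epsilon> > 0"
  let ?W = "\<lambda>t. V (x t)"
  have Vnn: "\<forall>y\<in>K. V y \<ge> 0" using Vpos V0 by (metis order_refl less_imp_le)
  obtain \<eta> where \<eta>: "\<eta> > 0" "\<forall>y\<in>K. V y < \<eta> \<longrightarrow> dist y sbar < \<epsilon>"
  proof (cases "{y\<in>K. \<epsilon> \<le> dist y sbar} = {}")
    case True
    then show ?thesis using that[of 1] by force
  next
    case False
    have cK: "compact {y\<in>K. \<epsilon> \<le> dist y sbar}"
    proof -
      have "{y\<in>K. \<epsilon> \<le> dist y sbar} = K \<inter> {y. \<epsilon> \<le> dist y sbar}" by auto
      moreover have "closed {y. \<epsilon> \<le> dist y sbar}"
        by (intro closed_Collect_le continuous_intros)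
      ultimately show ?thesis using K(1) by (simp add: compact_Int_closed)
    qed
    have "continuous_on {y\<in>K. \<epsilon> \<le> dist y sbar} V"
      using continuous_on_subset[OF Vc, of "{y\<in>K. \<epsilon> \<le> dist y sbar}"] K(2) by auto
    then obtain y0 where y0: "y0 \<in> {y\<in>K. \<epsilon> \<le> dist y sbar}"
      "\<forall>y\<in>{y\<in>K. \<epsilon> \<le> dist y sbar}. V y0 \<le> V y"
      using continuous_attains_inf[OF cK False] by blast
    have "V y0 > 0" using y0(1) Vpos \<epsilon> by auto
    moreover have "\<forall>y\<in>K. V y < V y0 \<longrightarrow> dist y sbar < \<epsilon>"
    proof (intro ballI impI)
      fix y assume yK: "y \<in> K" and Vy: "V y < V y0"
      show "dist y sbar < \<epsilon>"
      proof (rule ccontr)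
        assume "\<not> dist y sbar < \<epsilon>"
        then have "y \<in> {y\<in>K. \<epsilon> \<le> dist y sbar}" using yK by simp
        then have "V y0 \<le> V y" using y0(2) by blast
        then show False using Vy by simp
      qed
    qed
    ultimately show ?thesis by (rule that)
  qed
  obtain d where d: "d > 0" "\<forall>y\<in>N. dist y sbar \<le> d \<longrightarrow> V y < \<eta>"
  proof -
    have "\<exists>d0>0. \<forall>y\<in>N. dist y sbar < d0 \<longrightarrow> dist (V y) (V sbar) < \<eta>"
      using continuous_on_iff[THEN iffD1, OF Vc, rule_format, OF K(3) \<eta>(1)] .
    then obtain d0 where d0: "d0 > 0" "\<forall>y\<in>N. dist y sbar < d0 \<longrightarrow> dist (V y) (V sbar) < \<eta>"
      by blast
    have "\<forall>y\<in>N. dist y sbar \<le> d0/2 \<longrightarrow> V y < \<eta>"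
    proof (intro ballI impI)
      fix y assume yN: "y \<in> N" and dy: "dist y sbar \<le> d0/2"
      then have "dist y sbar < d0" using d0(1) by linarith
      then have "dist (V y) (V sbar) < \<eta>" using d0(2) yN by blast
      then show "V y < \<eta>" using V0 by (simp add: dist_real_def)
    qed
    moreover have "d0/2 > 0" using d0(1) by simp
    ultimately show ?thesis using that by blast
  qed
  define \<beta> where "\<beta> = \<alpha> d"
  have "\<alpha> 0 < \<alpha> d" by (rule strict_mono_onD[OF al(1)]) (use d(1) in auto)
  then have \<beta>: "\<beta> > 0" using al(2) unfolding \<beta>_def by simp
  have "eventually (\<lambda>t. r t < \<beta>/2) at_top"
    using order_tendstoD(2)[OF r, of "\<beta>/2"] \<beta> by simp
  then obtain T1a where T1a: "\<forall>t\<ge>T1a. r t < \<beta>/2" by (auto simp: eventually_at_top_linorder)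
  define T1 where "T1 = max T T1a"
  have T1: "T1 \<ge> T" "\<forall>t\<ge>T1. r t < \<beta>/2" using T1a by (auto simp: T1_def)
  have neg: "D t \<le> - \<beta>/2" if "t \<ge> T1" "dist (x t) sbar \<ge> d" for t
  proof -
    have "\<alpha> d \<le> \<alpha> (dist (x t) sbar)"
      by (rule strict_mono_on_leD[OF al(1)]) (use d(1) that(2) in auto)
    moreover have "D t \<le> - \<alpha> (dist (x t) sbar) + r t" using Dle T1(1) that(1) by simp
    moreover have "r t < \<beta>/2" using T1(2) that(1) by simp
    ultimately show ?thesis unfolding \<beta>_def by linarith
  qed
  have derT: "(?W has_real_derivative D t) (at t)" if "t \<ge> T1" for t
    using der T1 that by auto
  have "\<exists>t1\<ge>T1. dist (x t1) sbar \<le> d"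
  proof (rule ccontr)
    assume "\<not> ?thesis"
    then have far: "\<forall>t\<ge>T1. dist (x t) sbar > d" by force
    define t where "t = T1 + 2 * (?W T1 + 1) / \<beta>"
    have W1: "?W T1 \<ge> 0" using Vnn xK T1 by auto
    then have lt: "T1 < t" using \<beta> by (simp add: t_def)
    obtain z where z: "T1 < z" "z < t" "?W t - ?W T1 = (t - T1) * D z"
      using MVT2[OF lt, of ?W D] derT by auto
    have zT: "T1 \<le> z" using z by simp
    then have "d < dist (x z) sbar" using far by blast
    then have "D z \<le> - \<beta>/2" using neg[OF zT] by simp
    then have "(t - T1) * D z \<le> (t - T1) * (-\<beta>/2)" using lt by (intro mult_left_mono) auto
    also have "\<dots> = - (?W T1 + 1)" using \<beta> by (simp add: t_def field_simps)
    finally have "?W t \<le> -1" using z by linarith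
    moreover have "?W t \<ge> 0" using Vnn xK T1 lt by auto
    ultimately show False by linarith
  qed
  then obtain t1 where t1: "t1 \<ge> T1" "dist (x t1) sbar \<le> d" by blast
  have small: "?W t < \<eta>" if t: "t \<ge> t1" for t
  proof -
    define A where "A = {t1..t} \<inter> (\<lambda>\<tau>. dist (x \<tau>) sbar) -` {..d}"
    have "continuous_on {t1..t} (\<lambda>\<tau>. dist (x \<tau>) sbar)"
      by (intro continuous_intros continuous_on_subset[OF xc]) (use t1 T1 in auto)
    then have cA: "closed A" unfolding A_def
      by (intro continuous_closed_preimage) auto
    have t1A: "t1 \<in> A" using t1 t by (auto simp: A_def)
    have bA: "bdd_above A" by (auto simp: A_def bdd_above_def)
    define a where "a = Sup A"
    have aA: "a \<in> A" unfolding a_def using closed_contains_Sup[OF _ bA cA] t1A by auto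
    have aT: "t1 \<le> a" "a \<le> t" using aA by (auto simp: A_def)
    have "T \<le> a" using T1(1) t1(1) aT(1) by linarith
    then have "x a \<in> K" using xK by blast
    then have "x a \<in> N" using K(2) by blast
    moreover have "dist (x a) sbar \<le> d" using aA by (simp add: A_def)
    ultimately have Wa: "?W a < \<eta>" using d(2) by blast
    show ?thesis
    proof (cases "a = t")
      case True then show ?thesis using Wa by simp
    next
      case False
      then have lt: "a < t" using aT by simp
      obtain z where z: "a < z" "z < t" "?W t - ?W a = (t - a) * D z"
        using MVT2[OF lt, of ?W D] derT aT t1 by auto
      have "z \<notin> A"
      proof
        assume "z \<in> A"
        then have "z \<le> a" unfolding a_def using bA by (rule cSup_upper)
        then show False using z by simp
      qed
      then have "dist (x z) sbar > d" using z aT by (auto simp: A_def)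
      then have "D z \<le> - \<beta>/2" using neg[of z] z aT t1 by force
      then have "(t - a) * D z \<le> 0" using lt \<beta>
        by (simp add: mult_nonneg_nonpos)
      then show ?thesis using z Wa by linarith
    qed
  qed
  show "eventually (\<lambda>t. dist (x t) sbar < \<epsilon>) at_top"
    unfolding eventually_at_top_linorder
  proof (intro exI allI impI)
    fix t assume "t \<ge> t1"
    then show "dist (x t) sbar < \<epsilon>" using small \<eta>(2) xK t1 T1 by auto
  qed
qed


theorem theorem3p2:
  fixes v v' :: "'r::finite \<Rightarrow> nat ^ 'n"
    and U :: "(real ^ 'r) set"
    and u :: "real \<Rightarrow> real ^ 'r"
    and ubar :: "real ^ 'r"
    and s :: "real \<Rightarrow> real ^ 'n"
    and s0 sbar :: "real ^ 'n"
    and V :: "real ^ 'n \<Rightarrow> real"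
  assumes distinct_complexes: "\<forall>j. v j \<noteq> v' j"
    and U_pos: "U \<subseteq> pos_orthant"
    and u_in_U: "\<forall>t\<ge>0. u t \<in> U"
    and u_lim: "(u \<longlongrightarrow> ubar) at_top"
    and ubar_pos: "ubar \<in> pos_orthant"
    and s0_nonneg: "s0 \<in> nonneg_orthant"
    and init: "s 0 = s0"
    and sol: "\<forall>t\<ge>0. (s has_vector_derivative gma_field v v' (u t) (s t)) (at t within {0..})"
    and s_nonneg: "\<forall>t\<ge>0. s t \<in> nonneg_orthant"
    and s_bounded: "bounded (s ` {0..})"
    and sbar_pos: "sbar \<in> pos_orthant"
    and sbar_class: "sbar \<in> {s0 + x | x. x \<in> stoich_subspace v v'}"
    and sbar_eq: "gma_field v v' ubar sbar = 0"
    and sbar_unique: "\<forall>x\<in>{s0 + y | y. y \<in> stoich_subspace v v'} \<inter> pos_orthant.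
                        gma_field v v' ubar x = 0 \<longrightarrow> x = sbar"
    and lyap: "ISS_Lyapunov v v' U s0 V ubar sbar"
  shows "(s \<longlongrightarrow> sbar) at_top \<or>
         ((\<lambda>t. infdist (s t) (frontier nonneg_orthant)) \<longlongrightarrow> 0) at_top"
proof -
  let ?f = "\<lambda>t. gma_field v v' (u t) (s t)"
  obtain DV where dV: "\<forall>x\<in>pos_orthant. (V has_derivative (\<lambda>h. DV x \<bullet> h)) (at x)"
    and iss: "\<forall>F. compact F \<and> F \<subseteq> nonneg_orthant \<longrightarrow>
              (\<exists>\<alpha> \<rho>. class_K_inf \<alpha> \<and> class_K_inf \<rho> \<and>
                 (\<forall>u\<in>U. \<forall>s\<in>F \<inter> {s0 + x | x. x \<in> stoich_subspace v v'} \<inter> pos_orthant.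
                    DV s \<bullet> gma_field v v' u s \<le> - \<alpha> (norm (s - sbar)) + \<rho> (norm (u - ubar))))"
    using lyap[unfolded ISS_Lyapunov_def, THEN conjunct2, THEN conjunct2, THEN conjunct1] by blast
  note L = lyap[unfolded ISS_Lyapunov_def]
  have Vc: "continuous_on nonneg_orthant V" using L[THEN conjunct1] .
  have V0: "V sbar = 0" using L[THEN conjunct2, THEN conjunct2, THEN conjunct2, THEN conjunct2, THEN conjunct1] .
  have Vpos: "\<forall>x\<in>nonneg_orthant - {sbar}. V x > 0"
    using L[THEN conjunct2, THEN conjunct2, THEN conjunct2, THEN conjunct2, THEN conjunct2] .
  define K where "K = closure (s ` {0..})"
  have cK: "compact K" using s_bounded by (simp add: K_def)
  have KN: "K \<subseteq> nonneg_orthant" unfolding K_def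
    using s_nonneg closed_nonneg by (intro closure_minimal) auto
  have sK: "\<forall>t\<ge>0. s t \<in> K" unfolding K_def by (auto intro: closure_subset[THEN subsetD])
  obtain \<alpha> \<rho> where al: "class_K_inf \<alpha>" and rh: "class_K_inf \<rho>"
    and ineq: "\<forall>w\<in>U. \<forall>x\<in>K \<inter> {s0 + x | x. x \<in> stoich_subspace v v'} \<inter> pos_orthant.
                    DV x \<bullet> gma_field v v' w x \<le> - \<alpha> (norm (x - sbar)) + \<rho> (norm (w - ubar))"
    using iss[rule_format, OF conjI[OF cK KN]] by blast
  have cls: "s t \<in> {s0 + x | x. x \<in> stoich_subspace v v'}" if "t \<ge> 0" for t
  proof -
    have "s t - s0 \<in> stoich_subspace v v'" using in_class[OF sol that] init by simp
    then show ?thesis by (intro CollectI exI[of _ "s t - s0"]) auto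
  qed
  have sder: "(s has_vector_derivative ?f t) (at t)" if "t > 0" for t
    using deriv_at[of s "?f t" t] sol that by auto
  have scont: "continuous_on {0..} s"
    unfolding continuous_on_eq_continuous_within
  proof
    fix t :: real assume "t \<in> {0..}"
    then have "(s has_vector_derivative ?f t) (at t within {0..})" using sol by simp
    then show "continuous (at t within {0..}) s" by (rule has_vector_derivative_continuous)
  qed
  have dW: "((\<lambda>t. V (s t)) has_real_derivative (DV (s t) \<bullet> ?f t)) (at t)"
    if "t > 0" "s t \<in> pos_orthant" for t
  proof -
    have d1: "(s has_derivative (\<lambda>h. h *\<^sub>R ?f t)) (at t)"
      using sder[OF that(1)] by (simp add: has_vector_derivative_def)
    have "((\<lambda>t. V (s t)) has_derivative (\<lambda>h. DV (s t) \<bullet> (h *\<^sub>R ?f t))) (at t)"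
    proof -
      have d2: "(V has_derivative (\<lambda>h. DV (s t) \<bullet> h)) (at (s t))" using dV that(2) by blast
      show ?thesis using has_derivative_compose[OF d1 d2] .
    qed
    moreover have "(\<lambda>h. DV (s t) \<bullet> (h *\<^sub>R ?f t)) = (*) (DV (s t) \<bullet> ?f t)"
      by (simp add: fun_eq_iff mult.commute)
    ultimately show ?thesis by (simp add: has_field_derivative_def)
  qed
  obtain B where "\<forall>x\<in>s ` {0..}. norm x \<le> B"
    using s_bounded unfolding Elementary_Metric_Spaces.bounded_iff by blast
  then have B: "\<forall>t\<ge>0. norm (s t) \<le> B" by simp
  define M where "M = max 1 B"
  define Ub where "Ub = norm ubar + 1"
  have "eventually (\<lambda>t. dist (u t) ubar < 1) at_top"
    using u_lim by (simp add: tendstoD)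
  then obtain T0a where T0a: "\<forall>t\<ge>T0a. dist (u t) ubar < 1"
    by (auto simp: eventually_at_top_linorder)
  define T0 where "T0 = max 1 T0a"
  have T0: "T0 \<ge> 1" "\<forall>t\<ge>T0. dist (u t) ubar < 1" using T0a by (auto simp: T0_def)
  have ub: "\<forall>j. 0 < u t $ j \<and> u t $ j \<le> Ub" if "t \<ge> T0" for t
  proof
    fix j
    have "u t \<in> pos_orthant" using U_pos u_in_U that T0 by auto
    then have "0 < u t $ j" by (simp add: pos_orthant_def)
    moreover have "u t $ j \<le> norm (u t)" using component_le_norm_cart[of "u t" j] by simp
    moreover have "norm (u t) \<le> norm ubar + dist (u t) ubar"
      using norm_triangle_sub[of "u t" ubar] by (simp add: dist_norm)
    moreover have "dist (u t) ubar < 1" using T0(2) that by blast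
    ultimately show "0 < u t $ j \<and> u t $ j \<le> Ub" unfolding Ub_def by linarith
  qed
  have sM: "\<forall>k. s t $ k \<le> M" if "t \<ge> 0" for t
  proof
    fix k
    have "s t $ k \<le> norm (s t)" using component_le_norm_cart[of "s t" k] by simp
    moreover have "norm (s t) \<le> B" using B that by blast
    moreover have "B \<le> M" unfolding M_def by simp
    ultimately show "s t $ k \<le> M" by linarith
  qed
  have pers: "0 < s t $ i" if "T0 \<le> a" "a \<le> t" "0 < s a $ i" for i a t
  proof (rule persist[of a "\<lambda>t. s t $ i" "\<lambda>t. ?f t $ i"
        "\<Sum>j\<in>UNIV. Ub * (\<Prod>k\<in>UNIV. M ^ (v j $ k)) * real (v j $ i)"])
    show "\<forall>t\<ge>a. ((\<lambda>t. s t $ i) has_real_derivative ?f t $ i) (at t)"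
    proof (intro allI impI)
      fix t assume "a \<le> t"
      then have "0 < t" using that(1) T0(1) by linarith
      then show "((\<lambda>t. s t $ i) has_real_derivative ?f t $ i) (at t)"
        by (intro comp_deriv sder)
    qed
    show "\<forall>t\<ge>a. - (\<Sum>j\<in>UNIV. Ub * (\<Prod>k\<in>UNIV. M ^ (v j $ k)) * real (v j $ i)) * s t $ i \<le> ?f t $ i"
    proof (intro allI impI)
      fix t assume "a \<le> t"
      then have t: "T0 \<le> t" "0 \<le> t" using that T0 by auto
      show "- (\<Sum>j\<in>UNIV. Ub * (\<Prod>k\<in>UNIV. M ^ (v j $ k)) * real (v j $ i)) * s t $ i \<le> ?f t $ i"
        using field_lower[OF s_nonneg[rule_format, OF t(2)] sM[OF t(2)] _ ub[OF t(1)]]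
        by (simp add: M_def)
    qed
  qed (use that in auto)
  show ?thesis
  proof (cases "\<exists>T'\<ge>T0. s T' \<in> pos_orthant")
    case False
    have "eventually (\<lambda>t. infdist (s t) (frontier nonneg_orthant) = 0) at_top"
      unfolding eventually_at_top_linorder
    proof (intro exI allI impI)
      fix t assume t: "t \<ge> T0"
      then have tn: "s t \<in> nonneg_orthant" using s_nonneg T0 by auto
      have "s t \<notin> pos_orthant" using False t by blast
      then obtain i where "\<not> 0 < s t $ i" by (auto simp: pos_orthant_def)
      moreover have "0 \<le> s t $ i" using tn by (simp add: nonneg_orthant_def)
      ultimately have "s t $ i = 0" by linarith
      then show "infdist (s t) (frontier nonneg_orthant) = 0"
        using frontier_mem[OF tn] by simp
    qed
    then have "((\<lambda>t. infdist (s t) (frontier nonneg_orthant)) \<longlongrightarrow> 0) at_top"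
      by (rule tendsto_eventually)
    then show ?thesis by blast
  next
    case True
    then obtain T' where T': "T' \<ge> T0" "s T' \<in> pos_orthant" by blast
    have allpos: "s t \<in> pos_orthant" if "t \<ge> T'" for t
      unfolding pos_orthant_def
    proof (intro CollectI allI)
      fix i
      show "0 < s t $ i"
        by (rule pers[of T' t]) (use T' that in \<open>auto simp: pos_orthant_def\<close>)
    qed
    have "(s \<longlongrightarrow> sbar) at_top"
    proof (rule conv[where K=K and N=nonneg_orthant and T=T' and V=V and
          D="\<lambda>t. DV (s t) \<bullet> ?f t" and \<alpha>=\<alpha> and r="\<lambda>t. \<rho> (norm (u t - ubar))"])
      show "compact K" by (rule cK)
      show "K \<subseteq> nonneg_orthant" by (rule KN)
      show "sbar \<in> nonneg_orthant" using sbar_pos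
        by (auto simp: pos_orthant_def nonneg_orthant_def less_imp_le)
      show "\<forall>t\<ge>T'. s t \<in> K" using sK T' T0 by auto
      show "continuous_on {T'..} s" using T' T0 by (intro continuous_on_subset[OF scont]) auto
      show "continuous_on nonneg_orthant V" by (rule Vc)
      show "V sbar = 0" by (rule V0)
      show "\<forall>y\<in>K. y \<noteq> sbar \<longrightarrow> 0 < V y" using Vpos KN by auto
      show "\<forall>t\<ge>T'. ((\<lambda>t. V (s t)) has_real_derivative DV (s t) \<bullet> ?f t) (at t)"
        using dW allpos T' T0 by auto
      show "\<forall>t\<ge>T'. DV (s t) \<bullet> ?f t \<le> - \<alpha> (dist (s t) sbar) + \<rho> (norm (u t - ubar))"
      proof (intro allI impI)
        fix t assume t: "T' \<le> t"
        then have t0: "t \<ge> 0" using T' T0 by auto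
        show "DV (s t) \<bullet> ?f t \<le> - \<alpha> (dist (s t) sbar) + \<rho> (norm (u t - ubar))"
        proof -
          have uU: "u t \<in> U" using u_in_U t0 by blast
          have sx: "s t \<in> K \<inter> {s0 + x | x. x \<in> stoich_subspace v v'} \<inter> pos_orthant"
            using sK t0 cls[OF t0] allpos[OF t] by blast
          show ?thesis using ineq[rule_format, OF uU sx] by (simp add: dist_norm)
        qed
      qed
      show "((\<lambda>t. \<rho> (norm (u t - ubar))) \<longlongrightarrow> 0) at_top"
      proof -
        have N: "((\<lambda>t. norm (u t - ubar)) \<longlongrightarrow> 0) at_top"
          using u_lim by (intro tendsto_norm_zero) (simp add: LIM_zero)
        have C: "continuous_on {0..} \<rho>" using rh by (simp add: class_K_inf_def)
        have "((\<lambda>t. \<rho> (norm (u t - ubar))) \<longlongrightarrow> \<rho> 0) at_top"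
          by (rule continuous_on_tendsto_compose[OF C N]) auto
        then show ?thesis using rh by (simp add: class_K_inf_def)
      qed
      show "strict_mono_on {0..} \<alpha>" "\<alpha> 0 = 0" using al by (auto simp: class_K_inf_def)
    qed
    then show ?thesis by blast
  qed
qed

end
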